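(* Let $S$ be a commutative ring, $a,b,c,d\in S$, and let $R$ be an $S$-algebra such that $2$ is a regular element of $R$ and $2$ is either a prime element or a unit of $R$. Then $$\operatorname{Iso}_S((a,b),(c,d))(R)\simeq\{w\in R^\times: a^2-4b=w^2(c^2-4d)\}.$$ In particular, $R[x]/\langle x^2+ax+b\rangle\simeq R[y]/\langle y^2+cy+d\rangle$ as $R$-algebras if and only if $a^2-4b=w^2(c^2-4d)$ for some $w\in R^\times$.
   Context: $\operatorname{Iso}_S((a,b),(c,d))(R)$ denotes the set of $R$-algebra isomorphisms $R[x]/\langle x^2+ax+b\rangle\to R[y]/\langle y^2+cy+d\rangle$, where elements of $S$ are identified with their images in $R$. All rings are commutative and unitary. *)

theory Defs
  imports "HOL-Computational_Algebra.Factorial_Ring"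
begin

text \<open>The free R-algebra R[x]/(x^2 + a x + b), modelled on R x R via the
R-basis {1, x}: the pair (u, v) stands for u + v x.  Multiplication uses
x^2 = - a x - b.\<close>

definition quad_mult :: "'r::comm_ring_1 \<Rightarrow> 'r \<Rightarrow> 'r \<times> 'r \<Rightarrow> 'r \<times> 'r \<Rightarrow> 'r \<times> 'r" where
  "quad_mult a b p q =
     (fst p * fst q - b * (snd p * snd q),
      fst p * snd q + snd p * fst q - a * (snd p * snd q))"

definition quad_add :: "'r::comm_ring_1 \<times> 'r \<Rightarrow> 'r \<times> 'r \<Rightarrow> 'r \<times> 'r" where
  "quad_add p q = (fst p + fst q, snd p + snd q)"

definition quad_smult :: "'r::comm_ring_1 \<Rightarrow> 'r \<times> 'r \<Rightarrow> 'r \<times> 'r" where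
  "quad_smult r p = (r * fst p, r * snd p)"

definition quad_alg_hom :: "'r::comm_ring_1 \<Rightarrow> 'r \<Rightarrow> 'r \<Rightarrow> 'r \<Rightarrow> ('r \<times> 'r \<Rightarrow> 'r \<times> 'r) \<Rightarrow> bool" where
  "quad_alg_hom a b c d f \<longleftrightarrow>
     (\<forall>p q. f (quad_add p q) = quad_add (f p) (f q)) \<and>
     (\<forall>r p. f (quad_smult r p) = quad_smult r (f p)) \<and>
     (\<forall>p q. f (quad_mult a b p q) = quad_mult c d (f p) (f q)) \<and>
     f (1, 0) = (1, 0)"

definition quad_Iso :: "'r::comm_ring_1 \<Rightarrow> 'r \<Rightarrow> 'r \<Rightarrow> 'r \<Rightarrow> ('r \<times> 'r \<Rightarrow> 'r \<times> 'r) set" where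
  "quad_Iso a b c d = {f. quad_alg_hom a b c d f \<and> bij f}"

definition is_ring_hom :: "('s::comm_ring_1 \<Rightarrow> 'r::comm_ring_1) \<Rightarrow> bool" where
  "is_ring_hom \<phi> \<longleftrightarrow> \<phi> 1 = 1 \<and> (\<forall>x y. \<phi> (x + y) = \<phi> x + \<phi> y) \<and> (\<forall>x y. \<phi> (x * y) = \<phi> x * \<phi> y)"

end

theory Submission
  imports Defs
begin

lemma hom_form:
  assumes "quad_alg_hom a b c d f"
  shows "f (u,v) = (u + v * fst (f (0,1)), v * snd (f (0,1)))"
proof -
  have e: "(u,v) = quad_add (quad_smult u (1,0)) (quad_smult v (0,1))"
    by (simp add: quad_add_def quad_smult_def)
  have "f (u,v) = quad_add (quad_smult u (f (1,0))) (quad_smult v (f (0,1)))"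
    using assms unfolding quad_alg_hom_def by (metis e)
  also have "\<dots> = (u + v * fst (f (0,1)), v * snd (f (0,1)))"
    using assms by (simp add: quad_alg_hom_def quad_add_def quad_smult_def)
  finally show ?thesis .
qed

lemma hom_eqs:
  fixes a b c d :: "'r::comm_ring_1"
  assumes "quad_alg_hom a b c d f"
  defines "s \<equiv> fst (f (0,1))" and "t \<equiv> snd (f (0,1))"
  shows "s*s - d*(t*t) = - b - a*s" "s*t + t*s - c*(t*t) = - a*t"
proof -
  have "quad_mult a b (0,1) (0,1) = (-b, -a)" by (simp add: quad_mult_def)
  hence "f (-b,-a) = quad_mult c d (f (0,1)) (f (0,1))"
    using assms(1) unfolding quad_alg_hom_def by metis
  hence "(-b + -a*s, -a*t) = (s*s - d*(t*t), s*t + t*s - c*(t*t))"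
    using hom_form[OF assms(1), of "-b" "-a"] by (simp add: quad_mult_def s_def t_def prod_eq_iff)
  thus "s*s - d*(t*t) = - b - a*s" "s*t + t*s - c*(t*t) = - a*t" by auto
qed

lemma hom_unit:
  assumes "quad_alg_hom a b c d f" "bij f"
  shows "snd (f (0,1)) dvd 1"
proof -
  obtain p where "f p = (0,1)" using assms(2) by (metis bij_pointE)
  then have "snd p * snd (f (0,1)) = 1"
    using hom_form[OF assms(1), of "fst p" "snd p"] by simp
  thus ?thesis by (metis dvd_triv_right)
qed

lemma build_hom:
  fixes a b c d s t :: "'r::comm_ring_1"
  assumes E1: "s*s - d*(t*t) = - b - a*s" and E2: "s*t + t*s - c*(t*t) = - a*t"
  shows "quad_alg_hom a b c d (\<lambda>p. (fst p + snd p * s, snd p * t))"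
  unfolding quad_alg_hom_def
proof (intro conjI allI)
  fix p q :: "'r \<times> 'r"
  obtain u1 v1 where p: "p = (u1,v1)" by fastforce
  obtain u2 v2 where q: "q = (u2,v2)" by fastforce
  have 1: "u1*u2 - b*(v1*v2) + (u1*v2 + v1*u2 - a*(v1*v2)) * s
      = (u1 + v1*s)*(u2 + v2*s) - d*((v1*t)*(v2*t))"
  proof -
    have "(u1 + v1*s)*(u2 + v2*s) - d*((v1*t)*(v2*t)) - (u1*u2 - b*(v1*v2) + (u1*v2 + v1*u2 - a*(v1*v2)) * s)
        = v1*v2*((s*s - d*(t*t)) - (- b - a*s))" by (simp add: algebra_simps)
    also have "\<dots> = 0" using E1 by simp
    finally show ?thesis by simp
  qed
  have 2: "(u1*v2 + v1*u2 - a*(v1*v2)) * t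
      = (u1 + v1*s)*(v2*t) + (v1*t)*(u2 + v2*s) - c*((v1*t)*(v2*t))"
  proof -
    have "(u1 + v1*s)*(v2*t) + (v1*t)*(u2 + v2*s) - c*((v1*t)*(v2*t)) - (u1*v2 + v1*u2 - a*(v1*v2)) * t
        = v1*v2*((s*t + t*s - c*(t*t)) - (- a*t))" by (simp add: algebra_simps)
    also have "\<dots> = 0" using E2 by simp
    finally show ?thesis by simp
  qed
  show "(fst (quad_mult a b p q) + snd (quad_mult a b p q) * s, snd (quad_mult a b p q) * t) =
        quad_mult c d (fst p + snd p * s, snd p * t) (fst q + snd q * s, snd q * t)"
    using 1 2 by (simp add: p q quad_mult_def)
  show "(fst (quad_add p q) + snd (quad_add p q) * s, snd (quad_add p q) * t) =
        quad_add (fst p + snd p * s, snd p * t) (fst q + snd q * s, snd q * t)"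
    by (simp add: quad_add_def algebra_simps)
next
  fix r :: 'r and p :: "'r \<times> 'r"
  show "(fst (quad_smult r p) + snd (quad_smult r p) * s, snd (quad_smult r p) * t) =
        quad_smult r (fst p + snd p * s, snd p * t)"
    by (simp add: quad_smult_def algebra_simps)
qed simp

lemma build_bij:
  fixes s t :: "'r::comm_ring_1"
  assumes "t dvd 1"
  shows "bij (\<lambda>p. (fst p + snd p * s, snd p * t))"
proof -
  obtain t' where t': "t * t' = 1" using assms by (metis dvdE)
  let ?g = "\<lambda>p::'r\<times>'r. (fst p - snd p * t' * s, snd p * t')"
  show ?thesis
  proof (rule bij_betwI')
    fix x y :: "'r \<times> 'r"
    show "((fst x + snd x * s, snd x * t) = (fst y + snd y * s, snd y * t)) = (x = y)"
    proof
      assume h: "(fst x + snd x * s, snd x * t) = (fst y + snd y * s, snd y * t)"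
      then have "snd x * t * t' = snd y * t * t'" by simp
      then have "snd x = snd y" using t' by (simp add: mult.assoc)
      with h show "x = y" by (simp add: prod_eq_iff)
    qed simp
  next
    fix y :: "'r \<times> 'r"
    have t1: "snd y * t' * t = snd y" using t' by (metis mult.assoc mult.commute mult_1_right)
    have t2: "fst y - snd y * t' * s + snd y * t' * s = fst y" by simp
    have "y = (fst (?g y) + snd (?g y) * s, snd (?g y) * t)"
      using t1 t2 by (simp add: prod_eq_iff)
    thus "\<exists>x\<in>UNIV. y = (fst x + snd x * s, snd x * t)" by (rule bexI[OF _ UNIV_I])
  qed simp
qed

lemma unit_cancel:
  fixes t x :: "'r::comm_ring_1"
  assumes "t dvd 1" "t * x = 0" shows "x = 0"
proof -
  obtain t' where "t * t' = 1" using assms by (metis dvdE)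
  hence "x = t' * (t * x)" by (simp add: algebra_simps) (metis mult.assoc mult.commute mult_1_left)
  thus ?thesis using assms by simp
qed

lemma general:
  fixes a b c d :: "'r::comm_ring_1"
  assumes regular: "\<forall>r::'r. 2 * r = 0 \<longrightarrow> r = 0"
    and prime_or_unit: "prime_elem (2::'r) \<or> (2::'r) dvd 1"
  shows "bij_betw (\<lambda>f. snd (f (0,1))) (quad_Iso a b c d)
               {w::'r. w dvd 1 \<and> a ^ 2 - 4 * b = w ^ 2 * (c ^ 2 - 4 * d)}"
proof -
  have s_eq: "2 * fst (f (0,1)) = c * snd (f (0,1)) - a" if "f \<in> quad_Iso a b c d" for f
  proof -
    let ?s = "fst (f (0,1))" and ?t = "snd (f (0,1))"
    from that have h: "quad_alg_hom a b c d f" "bij f" by (auto simp: quad_Iso_def)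
    have u: "?t dvd 1" by (rule hom_unit[OF h])
    have "?t * (2 * ?s - c * ?t + a) = 0"
      using hom_eqs(2)[OF h(1)] by (simp add: algebra_simps)
    hence "2 * ?s - c * ?t + a = 0" by (rule unit_cancel[OF u])
    thus ?thesis by (simp add: algebra_simps)
  qed
  show ?thesis
  proof (rule bij_betw_imageI)
    show "inj_on (\<lambda>f. snd (f (0, 1))) (quad_Iso a b c d)"
    proof (rule inj_onI)
      fix f g assume f: "f \<in> quad_Iso a b c d" and g: "g \<in> quad_Iso a b c d"
        and e: "snd (f (0, 1)) = snd (g (0,1))"
      have "2 * fst (f (0,1)) = 2 * fst (g (0,1))"
        using s_eq[OF f] s_eq[OF g] e by simp
      hence "2 * (fst (f (0,1)) - fst (g (0,1))) = 0"
        by (simp add: right_diff_distrib)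
      hence "fst (f (0,1)) - fst (g (0,1)) = 0" by (rule regular[rule_format])
      hence "fst (f (0,1)) = fst (g (0,1))" by simp
      moreover have "quad_alg_hom a b c d f" "quad_alg_hom a b c d g"
        using f g by (auto simp: quad_Iso_def)
      ultimately show "f = g"
      proof (intro ext)
        fix p :: "'r \<times> 'r"
        assume s1: "fst (f (0,1)) = fst (g (0,1))" and hf: "quad_alg_hom a b c d f"
          and hg: "quad_alg_hom a b c d g"
        obtain u v where p: "p = (u,v)" by fastforce
        show "f p = g p" by (simp only: p hom_form[OF hf, of u v] hom_form[OF hg, of u v] s1 e)
      qed
    qed
  next
    show "(\<lambda>f. snd (f (0, 1))) ` quad_Iso a b c d =
          {w. w dvd 1 \<and> a\<^sup>2 - 4 * b = w\<^sup>2 * (c\<^sup>2 - 4 * d)}"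
    proof (intro equalityI subsetI)
      fix w assume "w \<in> (\<lambda>f. snd (f (0, 1))) ` quad_Iso a b c d"
      then obtain f where f: "f \<in> quad_Iso a b c d" and w: "w = snd (f (0,1))" by auto
      from f have h: "quad_alg_hom a b c d f" "bij f" by (auto simp: quad_Iso_def)
      let ?s = "fst (f (0,1))"
      have X: "?s*?s - d*(w*w) + b + a*?s = 0" using hom_eqs(1)[OF h(1)] w by (simp add: algebra_simps)
      have Y: "2 * ?s - (c * w - a) = 0" using s_eq[OF f] w by simp
      have E1: "?s*?s - d*(w*w) = - b - a*?s" using hom_eqs(1)[OF h(1)] w by simp
      have S: "2 * ?s = c * w - a" using s_eq[OF f] w by simp
      have "a ^ 2 - 4 * b - w ^ 2 * (c ^ 2 - 4 * d)
           = (2 * ?s - (c * w - a)) * (2 * ?s + a + c * w) - 4 * (?s*?s - d*(w*w) + b + a*?s)"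
        by (simp add: algebra_simps power2_eq_square)
      also have "\<dots> = 0" by (simp only: X Y mult_zero_left mult_zero_right diff_zero)
      finally have "a ^ 2 - 4 * b = w ^ 2 * (c ^ 2 - 4 * d)" by simp
      with hom_unit[OF h] w show "w \<in> {w. w dvd 1 \<and> a\<^sup>2 - 4 * b = w\<^sup>2 * (c\<^sup>2 - 4 * d)}" by simp
    next
      fix w assume "w \<in> {w. w dvd 1 \<and> a\<^sup>2 - 4 * b = w\<^sup>2 * (c\<^sup>2 - 4 * d)}"
      hence u: "w dvd 1" and D: "a\<^sup>2 - 4 * b = w\<^sup>2 * (c\<^sup>2 - 4 * d)" by auto
      have "2 dvd (c * w - a)"
        using prime_or_unit
      proof
        assume p: "prime_elem (2::'r)"
        have e: "(c * w - a) ^ 2 = 2 * (a^2 - 2*b + 2*d*w^2 - a*c*w)"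
        proof -
          have "(c * w - a) ^ 2 - 2 * (a^2 - 2*b + 2*d*w^2 - a*c*w)
              = w\<^sup>2 * (c\<^sup>2 - 4 * d) - (a\<^sup>2 - 4 * b)"
            by (simp add: algebra_simps power2_eq_square)
          also have "\<dots> = 0" using D by simp
          finally show ?thesis by simp
        qed
        have "2 dvd (c * w - a) ^ 2" unfolding e by (rule dvd_triv_left)
        thus ?thesis by (rule prime_elem_dvd_power[OF p])
      next
        assume "(2::'r) dvd 1" thus ?thesis by (rule dvd_trans[OF _ one_dvd])
      qed
      then obtain s where S: "c * w - a = 2 * s" unfolding dvd_def by blast
      have E2: "s*w + w*s - c*(w*w) = - a*w"
      proof -
        have "s*w + w*s - c*(w*w) - (- a*w) = w * (2*s - (c*w - a))" by (simp add: algebra_simps)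
        also have "\<dots> = 0" by (simp add: S)
        finally show ?thesis by (simp only: right_minus_eq)
      qed
      have "2 * (2 * (s*s - d*(w*w) + b + a*s)) = 0"
      proof -
        have "2 * (2 * (s*s - d*(w*w) + b + a*s))
            = (2*s - (c*w - a)) * (2*s + a + c*w) + (w\<^sup>2 * (c\<^sup>2 - 4 * d) - (a\<^sup>2 - 4 * b))"
          by (simp add: algebra_simps power2_eq_square)
        also have "\<dots> = 0" using S D by simp
        finally show ?thesis .
      qed
      hence "s*s - d*(w*w) + b + a*s = 0" by (rule regular[rule_format, OF regular[rule_format]])
      hence E1: "s*s - d*(w*w) = - b - a*s" by (simp add: algebra_simps)
      let ?f = "\<lambda>p. (fst p + snd p * s, snd p * w)"
      have "?f \<in> quad_Iso a b c d"
        using build_hom[OF E1 E2] build_bij[OF u] by (simp add: quad_Iso_def)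
      moreover have "w = snd (?f (0,1))" by simp
      ultimately show "w \<in> (\<lambda>f. snd (f (0, 1))) ` quad_Iso a b c d" by (rule rev_image_eqI[where x="?f"])
    qed
  qed
qed

theorem mainTheorem10:
  fixes \<phi> :: "'s::comm_ring_1 \<Rightarrow> 'r::comm_ring_1" and a b c d :: 's
  assumes hom: "is_ring_hom \<phi>"
    and regular: "\<forall>r::'r. 2 * r = 0 \<longrightarrow> r = 0"
    and prime_or_unit: "prime_elem (2::'r) \<or> (2::'r) dvd 1"
  shows "(\<exists>F. bij_betw F (quad_Iso (\<phi> a) (\<phi> b) (\<phi> c) (\<phi> d))
               {w::'r. w dvd 1 \<and> \<phi> a ^ 2 - 4 * \<phi> b = w ^ 2 * (\<phi> c ^ 2 - 4 * \<phi> d)})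
       \<and> (quad_Iso (\<phi> a) (\<phi> b) (\<phi> c) (\<phi> d) \<noteq> {} \<longleftrightarrow>
          (\<exists>w::'r. w dvd 1 \<and> \<phi> a ^ 2 - 4 * \<phi> b = w ^ 2 * (\<phi> c ^ 2 - 4 * \<phi> d)))"
proof -
  note B = general[OF regular prime_or_unit, of "\<phi> a" "\<phi> b" "\<phi> c" "\<phi> d"]
  define W where "W = {w::'r. w dvd 1 \<and> \<phi> a ^ 2 - 4 * \<phi> b = w ^ 2 * (\<phi> c ^ 2 - 4 * \<phi> d)}"
  define I where "I = quad_Iso (\<phi> a) (\<phi> b) (\<phi> c) (\<phi> d)"
  have img: "(\<lambda>f. snd (f (0,1))) ` I = W"
    unfolding I_def W_def by (rule bij_betw_imp_surj_on[OF B])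
  have e1: "I \<noteq> {} \<longleftrightarrow> W \<noteq> {}" unfolding img[symmetric] by (rule image_is_empty[symmetric, THEN arg_cong[where f=Not]])
  have e2: "W \<noteq> {} \<longleftrightarrow> (\<exists>w::'r. w dvd 1 \<and> \<phi> a ^ 2 - 4 * \<phi> b = w ^ 2 * (\<phi> c ^ 2 - 4 * \<phi> d))"
    unfolding W_def by blast
  have "\<exists>F. bij_betw F (quad_Iso (\<phi> a) (\<phi> b) (\<phi> c) (\<phi> d))
               {w::'r. w dvd 1 \<and> \<phi> a ^ 2 - 4 * \<phi> b = w ^ 2 * (\<phi> c ^ 2 - 4 * \<phi> d)}"
    by (rule exI, rule B)
  moreover have "quad_Iso (\<phi> a) (\<phi> b) (\<phi> c) (\<phi> d) \<noteq> {} \<longleftrightarrow>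
          (\<exists>w::'r. w dvd 1 \<and> \<phi> a ^ 2 - 4 * \<phi> b = w ^ 2 * (\<phi> c ^ 2 - 4 * \<phi> d))"
    using e1 e2 unfolding I_def by (rule trans)
  ultimately show ?thesis by (rule conjI)
qed

end
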